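(* Let $\lambda>0$ and $\gamma>0$. Let $\mathcal{F}_p^\lambda(r)=\{F_\lambda(x):x\in B_p(r)\}$. Let $$B_p^\gamma(r)=\{x\in B_p(r):\|x(\xi)\|\le\gamma\text{ for every }\xi\in\Omega\},$$ and let $\mathcal{F}_p^{\lambda,\gamma}(r)=\{F_\lambda(x):x\in B_p^\gamma(r)\}$. Then $$h_q\big(\mathcal{F}_p^\lambda(r),\mathcal{F}_p^{\lambda,\gamma}(r)\big)\le\frac{2r^p[\mu(\Omega)]^{1/q}M(\lambda)}{\gamma^{p-1}}.$$
   Context: Let $k,m,n\ge 1$ be integers and let $\Omega\subset\mathbb{R}^k$ be a compact set. Let $\mu$ denote Lebesgue measure. Let $p>1$, let $q$ satisfy $1/p+1/q=1$, and let $r>0$. $\|\cdot\|$ denotes the Euclidean norm on vectors and the Euclidean (Frobenius) norm on $m\times n$ matrices. $L_p(\Omega;\mathbb{R}^n)$ is the space of Lebesgue measurable $x:\Omega\to\mathbb{R}^n$ with $\|x\|_p=(\int_\Omega\|x(s)\|^p\,ds)^{1/p}<\infty$, and $B_p(r)=\{x\in L_p(\Omega;\mathbb{R}^n):\|x\|_p\le r\}$. $K_\lambda:\Omega\times\Omega\to\mathbb{R}^{m\times n}$ is a continuous function. Set $F_\lambda(x)(\xi)=\int_\Omega K_\lambda(\xi,s)x(s)\,ds$ and $M(\lambda)=\max\{\|K_\lambda(\xi,s)\|:(\xi,s)\in\Omega\times\Omega\}$. $h_q(U,V)=\max\{\sup_{u\in U}\inf_{v\in V}\|u-v\|_q,\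 \sup_{v\in V}\inf_{u\in U}\|u-v\|_q\}$ is the Hausdorff distance in $L_q(\Omega;\mathbb{R}^m)$. *)

theory Defs
  imports "HOL-Analysis.Analysis"
begin

definition Lp_norm :: "'a::euclidean_space set \<Rightarrow> real \<Rightarrow> ('a \<Rightarrow> 'b::real_normed_vector) \<Rightarrow> real" where
  "Lp_norm \<Omega> p x = enn2real (\<integral>\<^sup>+ s. ennreal (norm (x s) powr p) \<partial>(lebesgue_on \<Omega>)) powr (1 / p)"

definition Lp_space :: "'a::euclidean_space set \<Rightarrow> real \<Rightarrow> ('a \<Rightarrow> 'b::euclidean_space) set" where
  "Lp_space \<Omega> p = {x. x \<in> borel_measurable (lebesgue_on \<Omega>) \<and>
      (\<integral>\<^sup>+ s. ennreal (norm (x s) powr p) \<partial>(lebesgue_on \<Omega>)) < \<infinity>}"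

definition Bp :: "'a::euclidean_space set \<Rightarrow> real \<Rightarrow> real \<Rightarrow> ('a \<Rightarrow> 'b::euclidean_space) set" where
  "Bp \<Omega> p r = {x \<in> Lp_space \<Omega> p. Lp_norm \<Omega> p x \<le> r}"

definition Bp_gamma :: "'a::euclidean_space set \<Rightarrow> real \<Rightarrow> real \<Rightarrow> real \<Rightarrow> ('a \<Rightarrow> 'b::euclidean_space) set" where
  "Bp_gamma \<Omega> p r \<gamma> = {x \<in> Bp \<Omega> p r. \<forall>\<xi>\<in>\<Omega>. norm (x \<xi>) \<le> \<gamma>}"

definition F_op :: "'k::euclidean_space set \<Rightarrow> ('k \<Rightarrow> 'k \<Rightarrow> real^'n^'m) \<Rightarrow> ('k \<Rightarrow> real^'n) \<Rightarrow> 'k \<Rightarrow> real^'m" where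
  "F_op \<Omega> K x \<xi> = (LINT s|lebesgue_on \<Omega>. K \<xi> s *v x s)"

text \<open>M(lambda): maximum of the Frobenius norm of the kernel on Omega x Omega.\<close>
definition Mker :: "'k set \<Rightarrow> ('k \<Rightarrow> 'k \<Rightarrow> real^'n^'m) \<Rightarrow> real" where
  "Mker \<Omega> K = Sup ((\<lambda>(\<xi>, s). norm (K \<xi> s)) ` (\<Omega> \<times> \<Omega>))"

definition hausdorff_q :: "'a::euclidean_space set \<Rightarrow> real \<Rightarrow> ('a \<Rightarrow> 'b::real_normed_vector) set \<Rightarrow> ('a \<Rightarrow> 'b) set \<Rightarrow> real" where
  "hausdorff_q \<Omega> q U V = max (SUP u\<in>U. INF v\<in>V. Lp_norm \<Omega> q (\<lambda>\<xi>. u \<xi> - v \<xi>))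
                             (SUP v\<in>V. INF u\<in>U. Lp_norm \<Omega> q (\<lambda>\<xi>. u \<xi> - v \<xi>))"

end

theory Submission
  imports Defs
begin
lemma Lp_const_bound:
  fixes f :: "'a::euclidean_space \<Rightarrow> 'b::real_normed_vector"
  assumes "compact \<Omega>" "q > 0" "C \<ge> 0" "\<And>\<xi>. \<xi> \<in> \<Omega> \<Longrightarrow> norm (f \<xi>) \<le> C"
  shows "Lp_norm \<Omega> q f \<le> C * measure lebesgue \<Omega> powr (1/q)"
proof -
  have lm: "\<Omega> \<in> lmeasurable" using assms(1) by (rule lmeasurable_compact)
  have em: "emeasure (lebesgue_on \<Omega>) (space (lebesgue_on \<Omega>)) = ennreal (measure lebesgue \<Omega>)"
    using lm by (simp add: emeasure_restrict_space emeasure_eq_measure2)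
  have "(\<integral>\<^sup>+ s. ennreal (norm (f s) powr q) \<partial>(lebesgue_on \<Omega>)) \<le> (\<integral>\<^sup>+ s. ennreal (C powr q) \<partial>(lebesgue_on \<Omega>))"
    by (rule nn_integral_mono) (use assms in \<open>auto intro!: powr_mono2\<close>)
  also have "\<dots> = ennreal (C powr q * measure lebesgue \<Omega>)"
    using em by (simp add: ennreal_mult)
  finally have "enn2real (\<integral>\<^sup>+ s. ennreal (norm (f s) powr q) \<partial>(lebesgue_on \<Omega>)) \<le> C powr q * measure lebesgue \<Omega>"
    by (metis enn2real_ennreal enn2real_mono ennreal_less_top measure_nonneg mult_nonneg_nonneg powr_ge_zero)
  then have "Lp_norm \<Omega> q f \<le> (C powr q * measure lebesgue \<Omega>) powr (1/q)"
    unfolding Lp_norm_def using assms by (intro powr_mono2) auto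
  also have "\<dots> = C * measure lebesgue \<Omega> powr (1/q)"
    using assms by (simp add: powr_mult powr_powr)
  finally show ?thesis .
qed
lemma mv_norm_le: fixes A :: "real^'n^'m" shows "norm (A *v x) \<le> norm A * norm x"
proof -
  have c: "\<bar>(A *v x) $ i\<bar> \<le> norm (A $ i) * norm x" for i
  proof -
    have "(A *v x) $ i = A $ i \<bullet> x" by (simp add: matrix_vector_mult_def inner_vec_def)
    then show ?thesis using Cauchy_Schwarz_ineq2 by simp
  qed
  have "norm (A *v x) = L2_set (\<lambda>i. \<bar>(A *v x) $ i\<bar>) UNIV" by (simp add: norm_vec_def)
  also have "\<dots> \<le> L2_set (\<lambda>i. norm (A $ i) * norm x) UNIV" by (rule L2_set_mono) (use c in auto)
  also have "\<dots> = L2_set (\<lambda>i. norm (A $ i)) UNIV * norm x" by (simp add: L2_set_left_distrib)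
  also have "\<dots> = norm A * norm x" by (simp add: norm_vec_def)
  finally show ?thesis .
qed
lemma mv_cont: "continuous_on UNIV (\<lambda>z::(real^'n^'m) \<times> (real^'n). fst z *v snd z)"
  unfolding matrix_vector_mult_def by (intro continuous_intros)

lemma Mker_bound:
  fixes K :: "'k::euclidean_space \<Rightarrow> 'k \<Rightarrow> real^'n^'m"
  assumes "compact \<Omega>" "continuous_on (\<Omega> \<times> \<Omega>) (\<lambda>(\<xi>, s). K \<xi> s)" "\<xi> \<in> \<Omega>" "s \<in> \<Omega>"
  shows "norm (K \<xi> s) \<le> Mker \<Omega> K"
proof -
  have "continuous_on (\<Omega> \<times> \<Omega>) (\<lambda>z. norm ((\<lambda>(\<xi>, s). K \<xi> s) z))"
    using assms(2) by (intro continuous_on_norm)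
  then have "compact ((\<lambda>z. norm ((\<lambda>(\<xi>, s). K \<xi> s) z)) ` (\<Omega> \<times> \<Omega>))"
    using assms(1) by (intro compact_continuous_image compact_Times) auto
  then have "bdd_above ((\<lambda>(\<xi>, s). norm (K \<xi> s)) ` (\<Omega> \<times> \<Omega>))"
    by (auto intro!: bounded_imp_bdd_above compact_imp_bounded simp: case_prod_unfold)
  then show ?thesis unfolding Mker_def
    by (rule cSup_upper[rotated]) (use assms in auto)
qed

lemma K_slice_meas:
  fixes K :: "'k::euclidean_space \<Rightarrow> 'k \<Rightarrow> real^'n^'m"
  assumes "compact \<Omega>" "continuous_on (\<Omega> \<times> \<Omega>) (\<lambda>(\<xi>, s). K \<xi> s)" "\<xi> \<in> \<Omega>"
  shows "K \<xi> \<in> borel_measurable (lebesgue_on \<Omega>)"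
proof -
  have "continuous_on \<Omega> (\<lambda>s. (\<lambda>(\<xi>, s). K \<xi> s) (\<xi>, s))"
    by (rule continuous_on_compose2[OF assms(2)]) (use assms(3) in \<open>auto intro!: continuous_intros\<close>)
  then have "continuous_on \<Omega> (K \<xi>)" by simp
  then show ?thesis
    by (rule continuous_imp_measurable_on_sets_lebesgue) (use assms(1) lmeasurable_compact in \<open>auto simp: fmeasurable_def\<close>)
qed
lemma key:
  fixes \<Omega> :: "(real^'k) set"
    and K :: "real^'k \<Rightarrow> real^'k \<Rightarrow> real^'n^'m"
    and x :: "real^'k \<Rightarrow> real^'n"
  assumes cpt: "compact \<Omega>" and p: "p > 1" and r: "r > 0" and g: "\<gamma> > 0"
    and cont: "continuous_on (\<Omega> \<times> \<Omega>) (\<lambda>(\<xi>, s). K \<xi> s)"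
    and ne: "\<Omega> \<noteq> {}" and x: "x \<in> Bp \<Omega> p r"
  shows "\<exists>y\<in>Bp_gamma \<Omega> p r \<gamma>. \<forall>\<xi>\<in>\<Omega>. norm (F_op \<Omega> K x \<xi> - F_op \<Omega> K y \<xi>) \<le> Mker \<Omega> K * r powr p / \<gamma> powr (p - 1)"
proof -
  let ?L = "lebesgue_on \<Omega>"
  define M where "M = Mker \<Omega> K"
  have lm: "\<Omega> \<in> lmeasurable" using cpt by (rule lmeasurable_compact)
  interpret fin: finite_measure ?L using lm by (rule finite_measure_lebesgue_on)
  have Kb: "norm (K \<xi> s) \<le> M" if "\<xi> \<in> \<Omega>" "s \<in> \<Omega>" for \<xi> s
    unfolding M_def using Mker_bound[OF cpt cont that] .
  have M0: "M \<ge> 0" using ne Kb[of _ _] norm_ge_zero order_trans by blast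
  have xm[measurable]: "x \<in> borel_measurable ?L" and xfin: "(\<integral>\<^sup>+ s. ennreal (norm (x s) powr p) \<partial>?L) < \<infinity>"
    and xn: "enn2real (\<integral>\<^sup>+ s. ennreal (norm (x s) powr p) \<partial>?L) powr (1/p) \<le> r"
    using x by (auto simp: Bp_def Lp_space_def Lp_norm_def)
  define I where "I = (\<integral>\<^sup>+ s. ennreal (norm (x s) powr p) \<partial>?L)"
  have Ir: "enn2real I \<le> r powr p"
  proof -
    have "enn2real I = (enn2real I powr (1/p)) powr p" using p by (simp add: powr_powr)
    also have "\<dots> \<le> r powr p" using xn p by (intro powr_mono2) (auto simp: I_def)
    finally show ?thesis .
  qed
  have xpint: "integrable ?L (\<lambda>s. norm (x s) powr p)"
    by (rule integrableI_nonneg) (use xfin in auto)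
  have xpI: "integral\<^sup>L ?L (\<lambda>s. norm (x s) powr p) = enn2real I"
    unfolding I_def by (rule integral_eq_nn_integral) auto
  have xint: "integrable ?L x"
  proof -
    have "integrable ?L (\<lambda>s. norm (x s))"
    proof (rule Bochner_Integration.integrable_bound[where f="\<lambda>s. 1 + norm (x s) powr p"])
      show "integrable ?L (\<lambda>s. 1 + norm (x s) powr p)" using xpint by auto
      show "AE s in ?L. norm (norm (x s)) \<le> norm (1 + norm (x s) powr p)"
      proof (intro AE_I2)
        fix s
        have "norm (x s) \<le> 1 + norm (x s) powr p"
        proof (cases "norm (x s) \<le> 1")
          case False
          then have "norm (x s) = norm (x s) powr 1" by simp
          also have "\<dots> \<le> norm (x s) powr p" using False p by (intro powr_mono) auto
          finally show ?thesis by simp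
        qed (use powr_ge_zero[of "norm (x s)" p] in linarith)
        then show "norm (norm (x s)) \<le> norm (1 + norm (x s) powr p)" by simp
      qed
    qed auto
    then show ?thesis using integrable_norm_iff[of x] by simp
  qed
  define y where "y = (\<lambda>s. if norm (x s) \<le> \<gamma> then x s else 0)"
  have ym[measurable]: "y \<in> borel_measurable ?L" unfolding y_def by measurable
  have yle: "norm (y s) \<le> norm (x s)" for s by (simp add: y_def)
  have yint: "integrable ?L y" using xint by (rule Bochner_Integration.integrable_bound) (auto intro: yle)
  have yfin: "(\<integral>\<^sup>+ s. ennreal (norm (y s) powr p) \<partial>?L) \<le> I"
    unfolding I_def by (rule nn_integral_mono) (use p yle in \<open>auto intro!: powr_mono2\<close>)
  have yB: "y \<in> Bp_gamma \<Omega> p r \<gamma>"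
  proof -
    have "enn2real (\<integral>\<^sup>+ s. ennreal (norm (y s) powr p) \<partial>?L) \<le> enn2real I"
      using yfin xfin by (intro enn2real_mono) (auto simp: I_def)
    then have "Lp_norm \<Omega> p y \<le> enn2real I powr (1/p)"
      unfolding Lp_norm_def using p by (intro powr_mono2) auto
    then have "Lp_norm \<Omega> p y \<le> r" using xn by (simp add: I_def)
    moreover have "\<forall>\<xi>\<in>\<Omega>. norm (y \<xi>) \<le> \<gamma>" using g by (auto simp: y_def)
    ultimately show ?thesis using yfin xfin ym
      by (auto simp: Bp_gamma_def Bp_def Lp_space_def I_def)
  qed
  define d where "d = (\<lambda>s. x s - y s)"
  have dint: "integrable ?L d" unfolding d_def using xint yint by auto
  have dle: "norm (d s) \<le> norm (x s) powr p / \<gamma> powr (p - 1)" for s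
  proof (cases "norm (x s) \<le> \<gamma>")
    case True then show ?thesis by (simp add: d_def y_def)
  next
    case False
    then have n0: "norm (x s) > 0" using g by linarith
    have "norm (x s) * \<gamma> powr (p - 1) \<le> norm (x s) * norm (x s) powr (p - 1)"
      using False g p by (intro mult_left_mono powr_mono2) auto
    also have "\<dots> = norm (x s) powr p"
      using n0 by (simp add: powr_mult_base)
    finally show ?thesis using False g by (simp add: d_def y_def pos_le_divide_eq)
  qed
  have "\<forall>\<xi>\<in>\<Omega>. norm (F_op \<Omega> K x \<xi> - F_op \<Omega> K y \<xi>) \<le> M * r powr p / \<gamma> powr (p - 1)"
  proof
    fix \<xi> assume \<xi>: "\<xi> \<in> \<Omega>"
    have Km[measurable]: "K \<xi> \<in> borel_measurable ?L" using K_slice_meas[OF cpt cont \<xi>] .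
    have mvm: "(\<lambda>s. K \<xi> s *v f s) \<in> borel_measurable ?L" if [measurable]: "f \<in> borel_measurable ?L" for f :: "real^'k \<Rightarrow> real^'n"
      using borel_measurable_continuous_Pair[OF Km that mv_cont] .
    have mvi: "integrable ?L (\<lambda>s. K \<xi> s *v f s)" if fi: "integrable ?L f" for f :: "real^'k \<Rightarrow> real^'n"
    proof (rule Bochner_Integration.integrable_bound[where f="\<lambda>s. M * norm (f s)"])
      show "integrable ?L (\<lambda>s. M * norm (f s))" using fi by auto
      show "(\<lambda>s. K \<xi> s *v f s) \<in> borel_measurable ?L" using fi by (intro mvm) auto
      show "AE s in ?L. norm (K \<xi> s *v f s) \<le> norm (M * norm (f s))"
      proof (rule AE_I2)
        fix s assume "s \<in> space ?L"
        then have "s \<in> \<Omega>" by simp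
        have "norm (K \<xi> s *v f s) \<le> norm (K \<xi> s) * norm (f s)" by (rule mv_norm_le)
        also have "\<dots> \<le> M * norm (f s)" using Kb[OF \<xi> \<open>s \<in> \<Omega>\<close>] by (intro mult_right_mono) auto
        finally show "norm (K \<xi> s *v f s) \<le> norm (M * norm (f s))" using M0 by simp
      qed
    qed
    have "F_op \<Omega> K x \<xi> - F_op \<Omega> K y \<xi> = (LINT s|?L. K \<xi> s *v x s - K \<xi> s *v y s)"
      unfolding F_op_def using mvi[OF xint] mvi[OF yint] by simp
    also have "\<dots> = (LINT s|?L. K \<xi> s *v d s)" by (simp add: d_def matrix_vector_mult_diff_distrib)
    finally have eq: "F_op \<Omega> K x \<xi> - F_op \<Omega> K y \<xi> = (LINT s|?L. K \<xi> s *v d s)" .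
    have "norm (LINT s|?L. K \<xi> s *v d s) \<le> (LINT s|?L. M * norm (d s))"
    proof (rule Bochner_Integration.integral_norm_bound_integral)
      show "integrable ?L (\<lambda>s. K \<xi> s *v d s)" using mvi[OF dint] .
      show "integrable ?L (\<lambda>s. M * norm (d s))" using dint by auto
      fix s assume "s \<in> space ?L"
      then have "s \<in> \<Omega>" by simp
      have "norm (K \<xi> s *v d s) \<le> norm (K \<xi> s) * norm (d s)" by (rule mv_norm_le)
      also have "\<dots> \<le> M * norm (d s)" using Kb[OF \<xi> \<open>s \<in> \<Omega>\<close>] by (intro mult_right_mono) auto
      finally show "norm (K \<xi> s *v d s) \<le> M * norm (d s)" .
    qed
    also have "\<dots> = M * (LINT s|?L. norm (d s))" by simp
    also have "\<dots> \<le> M * (LINT s|?L. norm (x s) powr p / \<gamma> powr (p - 1))"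
      using M0 dint xpint dle by (intro mult_left_mono integral_mono) auto
    also have "\<dots> = M * (enn2real I / \<gamma> powr (p - 1))" using xpI by simp
    also have "\<dots> \<le> M * (r powr p / \<gamma> powr (p - 1))"
      using M0 Ir g by (intro mult_left_mono divide_right_mono) auto
    finally show "norm (F_op \<Omega> K x \<xi> - F_op \<Omega> K y \<xi>) \<le> M * r powr p / \<gamma> powr (p - 1)"
      using eq by simp
  qed
  then show ?thesis using yB unfolding M_def by blast
qed
theorem mainTheorem4:
  fixes \<Omega> :: "(real^'k) set"
    and K :: "real \<Rightarrow> real^'k \<Rightarrow> real^'k \<Rightarrow> real^'n^'m"
    and p q r lam \<gamma> :: real
  assumes "compact \<Omega>"
    and "p > 1" and "1 / p + 1 / q = 1" and "r > 0"
    and "lam > 0" and "\<gamma> > 0"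
    and "continuous_on (\<Omega> \<times> \<Omega>) (\<lambda>(\<xi>, s). K lam \<xi> s)"
  shows "hausdorff_q \<Omega> q
           ((\<lambda>x. F_op \<Omega> (K lam) x) ` (Bp \<Omega> p r :: (real^'k \<Rightarrow> real^'n) set))
           ((\<lambda>x. F_op \<Omega> (K lam) x) ` (Bp_gamma \<Omega> p r \<gamma> :: (real^'k \<Rightarrow> real^'n) set))
         \<le> 2 * r powr p * measure lebesgue \<Omega> powr (1 / q) * Mker \<Omega> (K lam) / \<gamma> powr (p - 1)"
proof -
  note cpt = assms(1) and p = assms(2) and r = assms(4) and g = assms(6) and cont = assms(7)
  have q: "q > 0"
  proof -
    have "1 / p < 1" using p by simp
    then have "1 / q > 0" using assms(3) by linarith
    then show ?thesis by simp
  qed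
  let ?F = "\<lambda>x. F_op \<Omega> (K lam) x"
  let ?A = "?F ` (Bp \<Omega> p r :: (real^'k \<Rightarrow> real^'n) set)"
  let ?B = "?F ` (Bp_gamma \<Omega> p r \<gamma> :: (real^'k \<Rightarrow> real^'n) set)"
  define B0 where "B0 = Mker \<Omega> (K lam) * r powr p / \<gamma> powr (p - 1) * measure lebesgue \<Omega> powr (1 / q)"
  have Lp0: "Lp_norm \<Omega> q f \<ge> 0" for f :: "real^'k \<Rightarrow> real^'m" by (simp add: Lp_norm_def)
  have zero: "Lp_norm \<Omega> q (\<lambda>\<xi>. u \<xi> - u \<xi>) = 0" for u :: "real^'k \<Rightarrow> real^'m"
    by (simp add: Lp_norm_def)
  have B0nn: "B0 \<ge> 0"
  proof (cases "\<Omega> = {}")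
    case True then show ?thesis by (simp add: B0_def)
  next
    case False
    then obtain a where "a \<in> \<Omega>" by auto
    then have "0 \<le> Mker \<Omega> (K lam)" using Mker_bound[OF cpt cont, of a a] norm_ge_zero order_trans by blast
    then show ?thesis unfolding B0_def by (intro mult_nonneg_nonneg divide_nonneg_nonneg) auto
  qed
  have rhs: "2 * r powr p * measure lebesgue \<Omega> powr (1 / q) * Mker \<Omega> (K lam) / \<gamma> powr (p - 1) = 2 * B0"
    by (simp add: B0_def)
  have zB: "(\<lambda>_. 0) \<in> (Bp_gamma \<Omega> p r \<gamma> :: (real^'k \<Rightarrow> real^'n) set)"
    using r g p by (auto simp: Bp_gamma_def Bp_def Lp_space_def Lp_norm_def)
  have sub: "(Bp_gamma \<Omega> p r \<gamma> :: (real^'k \<Rightarrow> real^'n) set) \<subseteq> Bp \<Omega> p r"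
    by (auto simp: Bp_gamma_def)
  have key': "\<exists>y\<in>(Bp_gamma \<Omega> p r \<gamma> :: (real^'k \<Rightarrow> real^'n) set). Lp_norm \<Omega> q (\<lambda>\<xi>. ?F x \<xi> - ?F y \<xi>) \<le> B0"
    if x: "x \<in> Bp \<Omega> p r" for x
  proof (cases "\<Omega> = {}")
    case True
    then have "x \<in> Bp_gamma \<Omega> p r \<gamma>" using x by (simp add: Bp_gamma_def)
    moreover have "Lp_norm \<Omega> q (\<lambda>\<xi>. ?F x \<xi> - ?F x \<xi>) \<le> B0"
      using zero[of "?F x"] B0nn by linarith
    ultimately show ?thesis by blast
  next
    case False
    obtain y where y: "y \<in> Bp_gamma \<Omega> p r \<gamma>"
      and yb: "\<forall>\<xi>\<in>\<Omega>. norm (?F x \<xi> - ?F y \<xi>) \<le> Mker \<Omega> (K lam) * r powr p / \<gamma> powr (p - 1)"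
      using key[OF cpt p r g cont False x] by blast
    obtain a where "a \<in> \<Omega>" using False by auto
    then have C0: "Mker \<Omega> (K lam) * r powr p / \<gamma> powr (p - 1) \<ge> 0"
      using yb norm_ge_zero order_trans by blast
    have "Lp_norm \<Omega> q (\<lambda>\<xi>. ?F x \<xi> - ?F y \<xi>) \<le> B0"
      unfolding B0_def by (rule Lp_const_bound[OF cpt q C0]) (use yb in auto)
    then show ?thesis using y by blast
  qed
  have bdd: "bdd_below ((\<lambda>v. Lp_norm \<Omega> q (\<lambda>\<xi>. u \<xi> - v \<xi>)) ` S)" for u :: "real^'k \<Rightarrow> real^'m" and S
    using Lp0 by (intro bdd_belowI[where m=0]) auto
  have bdd2: "bdd_below ((\<lambda>u. Lp_norm \<Omega> q (\<lambda>\<xi>. u \<xi> - v \<xi>)) ` S)" for v :: "real^'k \<Rightarrow> real^'m" and S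
    using Lp0 by (intro bdd_belowI[where m=0]) auto
  have s1: "(SUP u\<in>?A. INF v\<in>?B. Lp_norm \<Omega> q (\<lambda>\<xi>. u \<xi> - v \<xi>)) \<le> B0"
  proof (rule cSUP_least)
    show "?A \<noteq> {}" using zB sub by blast
    fix u assume "u \<in> ?A"
    then obtain x where x: "x \<in> Bp \<Omega> p r" and u: "u = ?F x" by blast
    obtain y where y: "y \<in> Bp_gamma \<Omega> p r \<gamma>" and yb: "Lp_norm \<Omega> q (\<lambda>\<xi>. ?F x \<xi> - ?F y \<xi>) \<le> B0"
      using key'[OF x] by blast
    show "(INF v\<in>?B. Lp_norm \<Omega> q (\<lambda>\<xi>. u \<xi> - v \<xi>)) \<le> B0"
      by (rule cINF_lower2[OF bdd, of "?F y"]) (use y yb u in auto)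
  qed
  have s2: "(SUP v\<in>?B. INF u\<in>?A. Lp_norm \<Omega> q (\<lambda>\<xi>. u \<xi> - v \<xi>)) \<le> B0"
  proof (rule cSUP_least)
    show "?B \<noteq> {}" using zB by blast
    fix v assume v: "v \<in> ?B"
    then have "v \<in> ?A" using sub by blast
    show "(INF u\<in>?A. Lp_norm \<Omega> q (\<lambda>\<xi>. u \<xi> - v \<xi>)) \<le> B0"
      by (rule cINF_lower2[OF bdd2 \<open>v \<in> ?A\<close>]) (use zero B0nn in auto)
  qed
  have "hausdorff_q \<Omega> q ?A ?B \<le> B0" unfolding hausdorff_q_def using s1 s2 by simp
  also have "\<dots> \<le> 2 * B0" using B0nn by simp
  finally show ?thesis using rhs by simp
qed
end
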